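(* Let $\varkappa>0$, $n\in\mathbb{N}$, and $z_j=e^{i\arg z_j}$, $j=1,\dots,n$, distinct points of $\mathbb{T}$. Let $g$ be analytic in $\Delta$ such that (1) there are $c_0>0$, $r_0\in(0,1)$ with $|g(z)|\ge c_0$ whenever $r_0<|z|<1$; and (2) for each $j$ there are $r_j\in(0,1)$, $\vartheta_j>0$, $C_j>0$ with $|g(z)|\le C_j$ on $\Omega_j=\{re^{i\theta}:r_j<r<1,\ \arg z_j-\vartheta_j<\theta<\arg z_j+\vartheta_j\}$, where $\Omega_{j_1}\cap\Omega_{j_2}=\emptyset$ for $j_1\ne j_2$. Let $f(z)=\prod_{j=1}^n(z-z_j)g(z)$. Then, as $r\to1^-$, $\int_{-\pi}^{\pi}\frac{d\theta}{|f(re^{i\theta})|^\varkappa}\asymp\frac{1}{(1-r)^{\varkappa-1}}$ if $\varkappa>1$, $\asymp\log\frac{1}{1-r}$ if $\varkappa=1$, and $\asymp1$ if $\varkappa\in(0,1)$.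
   Context: $\Delta$ unit disk, $\mathbb{T}=\partial\Delta$. For positive functions $A(r),B(r)$, $A\asymp B$ as $r\to1^-$ means there are constants $0<c_1\le c_2$ with $c_1A(r)\le B(r)\le c_2A(r)$ for all $r$ sufficiently close to $1$. *)

theory Defs
  imports "HOL-Complex_Analysis.Complex_Analysis"
begin

definition asymp_near1 :: "(real \<Rightarrow> real) \<Rightarrow> (real \<Rightarrow> real) \<Rightarrow> bool" where
  "asymp_near1 A B \<longleftrightarrow> (\<exists>c1 c2. 0 < c1 \<and> c1 \<le> c2 \<and>
      (\<forall>\<^sub>F r in at_left 1. c1 * A r \<le> B r \<and> B r \<le> c2 * A r))"

definition sector :: "real \<Rightarrow> real \<Rightarrow> real \<Rightarrow> complex set" where
  "sector rj a t = {complex_of_real \<rho> * exp (\<i> * complex_of_real \<theta>) | \<rho> \<theta>.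
      rj < \<rho> \<and> \<rho> < 1 \<and> a - t < \<theta> \<and> \<theta> < a + t}"

end

theory Submission
  imports Defs
begin

definition Gf :: "real \<Rightarrow> real \<Rightarrow> real \<Rightarrow> real \<Rightarrow> real" where
  "Gf k e c t = (if k = 1 then ln (e + c*t) / c else (e + c*t) powr (1 - k) / (c*(1-k)))"

definition hh :: "real \<Rightarrow> real \<Rightarrow> real \<Rightarrow> real \<Rightarrow> real" where
  "hh k e c t = (e + c*t) powr (-k)"

lemma Gf_deriv:
  assumes "0 < c" "0 < e + c*t"
  shows "(Gf k e c has_real_derivative hh k e c t) (at t)"
proof (cases "k = 1")
  case True
  have "((\<lambda>t. ln (e + c*t) / c) has_real_derivative (c / (e + c*t)) / c) (at t)"
    using assms by (auto intro!: derivative_eq_intros)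
  moreover have "(c / (e + c*t)) / c = hh k e c t"
    using assms True by (simp add: hh_def powr_minus_divide)
  ultimately show ?thesis using True by (simp add: Gf_def[abs_def])
next
  case False
  have "((\<lambda>t. (e + c*t) powr (1 - k) / (c*(1-k))) has_real_derivative
        ((1-k) * (e + c*t) powr (1 - k - 1) * c) / (c*(1-k))) (at t)"
    using assms by (auto intro!: derivative_eq_intros DERIV_powr)
  moreover have "((1-k) * (e + c*t) powr (1 - k - 1) * c) / (c*(1-k)) = hh k e c t"
    using assms False by (simp add: hh_def)
  ultimately show ?thesis using False by (simp add: Gf_def[abs_def])
qed

lemma hh_right:
  assumes "0 < c" "0 < e" "b \<le> x" "x \<le> y"
  shows "((\<lambda>\<theta>. hh k e c \<bar>\<theta> - b\<bar>) has_integral (Gf k e c (y-b) - Gf k e c (x-b))) {x..y}"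
proof -
  have "((\<lambda>\<theta>. hh k e c (\<theta> - b)) has_integral (Gf k e c (y-b) - Gf k e c (x-b))) {x..y}"
  proof (rule fundamental_theorem_of_calculus[OF assms(4)])
    fix \<theta> assume th: "\<theta> \<in> {x..y}"
    have pos: "0 < e + c * (\<theta> - b)" using th assms by (auto intro: add_pos_nonneg)
    have dG: "(Gf k e c has_real_derivative hh k e c (\<theta> - b)) (at (\<theta> - b))"
      using Gf_deriv[OF assms(1) pos] .
    have "((\<lambda>\<theta>. Gf k e c (\<theta> - b)) has_real_derivative hh k e c (\<theta> - b) * 1) (at \<theta>)"
      by (rule DERIV_chain2[where f="Gf k e c" and g="\<lambda>\<theta>. \<theta> - b"]) (use dG in \<open>auto intro!: derivative_eq_intros\<close>)
    then show "((\<lambda>\<theta>. Gf k e c (\<theta> - b)) has_vector_derivative hh k e c (\<theta> - b)) (at \<theta> within {x..y})"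
      by (simp add: has_real_derivative_iff_has_vector_derivative has_vector_derivative_at_within)
  qed
  then show ?thesis
    by (rule has_integral_eq[rotated]) (use assms in auto)
qed

lemma hh_left:
  assumes "0 < c" "0 < e" "x \<le> y" "y \<le> b"
  shows "((\<lambda>\<theta>. hh k e c \<bar>\<theta> - b\<bar>) has_integral (Gf k e c (b-x) - Gf k e c (b-y))) {x..y}"
proof -
  have "((\<lambda>\<theta>. hh k e c (b - \<theta>)) has_integral ((- Gf k e c (b-y)) - (- Gf k e c (b-x)))) {x..y}"
  proof (rule fundamental_theorem_of_calculus[OF assms(3)])
    fix \<theta> assume th: "\<theta> \<in> {x..y}"
    have pos: "0 < e + c * (b - \<theta>)" using th assms by (auto intro: add_pos_nonneg)
    have dG: "(Gf k e c has_real_derivative hh k e c (b - \<theta>)) (at (b - \<theta>))"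
      using Gf_deriv[OF assms(1) pos] .
    have "((\<lambda>\<theta>. Gf k e c (b - \<theta>)) has_real_derivative hh k e c (b - \<theta>) * (-1)) (at \<theta>)"
      by (rule DERIV_chain2[where f="Gf k e c" and g="\<lambda>\<theta>. b - \<theta>"]) (use dG in \<open>auto intro!: derivative_eq_intros\<close>)
    then have "((\<lambda>\<theta>. - Gf k e c (b - \<theta>)) has_real_derivative hh k e c (b - \<theta>)) (at \<theta>)"
      using DERIV_minus by fastforce
    then show "((\<lambda>\<theta>. - Gf k e c (b - \<theta>)) has_vector_derivative hh k e c (b - \<theta>)) (at \<theta> within {x..y})"
      by (simp add: has_real_derivative_iff_has_vector_derivative has_vector_derivative_at_within)
  qed
  then have "((\<lambda>\<theta>. hh k e c (b - \<theta>)) has_integral (Gf k e c (b-x) - Gf k e c (b-y))) {x..y}"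
    by simp
  then show ?thesis
    by (rule has_integral_eq[rotated]) (use assms in auto)
qed

lemma hh_sym:
  assumes "0 < c" "0 < e" "0 \<le> M"
  shows "((\<lambda>\<theta>. hh k e c \<bar>\<theta> - b\<bar>) has_integral (2 * (Gf k e c M - Gf k e c 0))) {b-M..b+M}"
proof -
  have "((\<lambda>\<theta>. hh k e c \<bar>\<theta> - b\<bar>) has_integral ((Gf k e c (b-(b-M)) - Gf k e c (b-b)) + (Gf k e c (b+M-b) - Gf k e c (b-b)))) {b-M..b+M}"
    by (rule has_integral_combine[of _ b]) (use assms hh_left[of c e "b-M" b b k] hh_right[of c e b b "b+M" k] in auto)
  then show ?thesis by simp
qed


lemma sin_lb: fixes v :: real assumes "\<bar>v\<bar> \<le> 2" shows "\<bar>v\<bar> / 3 \<le> \<bar>sin v\<bar>"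
proof -
  have m: "\<bar>sin v - (\<Sum>m<3. sin_coeff m * v ^ m)\<bar> \<le> inverse (fact 3) * \<bar>v\<bar> ^ 3"
    by (rule Maclaurin_sin_bound)
  have s: "(\<Sum>m<3. sin_coeff m * v ^ m) = v"
    by (simp add: eval_nat_numeral sin_coeff_def)
  have "\<bar>v\<bar> ^ 3 = \<bar>v\<bar>^2 * \<bar>v\<bar>" by (simp add: power3_eq_cube power2_eq_square)
  also have "\<dots> \<le> 4 * \<bar>v\<bar>"
  proof -
    have "\<bar>v\<bar>^2 \<le> 2^2" using assms by (intro power_mono) auto
    then show ?thesis by (intro mult_right_mono) auto
  qed
  finally have "\<bar>v\<bar> ^ 3 \<le> 4 * \<bar>v\<bar>" .
  then have "\<bar>sin v - v\<bar> \<le> 4 * \<bar>v\<bar> / 6" using m s by (simp add: fact_numeral)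
  then show ?thesis by linarith
qed

lemma exp_diff_norm: "cmod (exp (\<i> * of_real \<theta>) - exp (\<i> * of_real b)) = 2 * \<bar>sin ((\<theta> - b) / 2)\<bar>"
proof -
  have "exp (\<i> * of_real \<theta>) - exp (\<i> * of_real b) = exp (\<i> * of_real b) * (exp (\<i> * of_real (\<theta> - b)) - 1)"
    by (simp add: algebra_simps flip: exp_add)
  then have "cmod (exp (\<i> * of_real \<theta>) - exp (\<i> * of_real b)) = cmod (exp (\<i> * of_real (\<theta> - b)) - 1)"
    by (simp add: norm_mult)
  also have "\<dots> = 2 * \<bar>sin ((\<theta> - b) / 2)\<bar>" by (rule dist_exp_i_1)
  finally show ?thesis .
qed

lemma exp_diff_le: "cmod (exp (\<i> * of_real \<theta>) - exp (\<i> * of_real b)) \<le> \<bar>\<theta> - b\<bar>"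
  unfolding exp_diff_norm using abs_sin_x_le_abs_x[of "(\<theta> - b)/2"] by simp

definition mdist :: "real \<Rightarrow> real" where
  "mdist u = min \<bar>u\<bar> (min \<bar>u - 2*pi\<bar> \<bar>u + 2*pi\<bar>)"

lemma exp_diff_ge:
  assumes "\<bar>\<theta> - b\<bar> \<le> 2*pi"
  shows "mdist (\<theta> - b) / 3 \<le> cmod (exp (\<i> * of_real \<theta>) - exp (\<i> * of_real b))"
proof -
  define v where "v = (\<theta> - b) / 2"
  have v: "\<bar>v\<bar> \<le> pi" using assms by (simp add: v_def)
  have pi4: "pi < 4" by (rule pi_less_4)
  have "mdist (2 * v) \<le> 6 * abs (sin v)"
  proof (cases "\<bar>v\<bar> \<le> 2")
    case True
    then have "\<bar>v\<bar>/3 \<le> \<bar>sin v\<bar>" by (rule sin_lb)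
    moreover have "mdist (2 * v) \<le> \<bar>2 * v\<bar>" by (simp add: mdist_def)
    ultimately show ?thesis by simp
  next
    case False
    have w: "\<bar>pi - \<bar>v\<bar>\<bar> \<le> 2" using False v pi4 by linarith
    have "sin (pi - \<bar>v\<bar>) = sin \<bar>v\<bar>" by simp
    moreover have "\<bar>sin \<bar>v\<bar>\<bar> = \<bar>sin v\<bar>" by (cases "v \<ge> 0") auto
    ultimately have "\<bar>pi - \<bar>v\<bar>\<bar>/3 \<le> \<bar>sin v\<bar>" using sin_lb[OF w] by simp
    moreover have "mdist (2 * v) \<le> 2 * \<bar>pi - \<bar>v\<bar>\<bar>"
      using v by (cases "v \<ge> 0") (auto simp: mdist_def)
    ultimately show ?thesis by simp
  qed
  moreover have "2 * v = \<theta> - b" by (simp add: v_def)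
  ultimately have "mdist (\<theta> - b) \<le> 6 * \<bar>sin v\<bar>" by (simp only:)
  then show ?thesis unfolding exp_diff_norm v_def by simp
qed


lemma cm1:
  assumes "0 \<le> r" "r \<le> 1"
  shows "cmod (complex_of_real r - 1) = 1 - r" "cmod (1 - complex_of_real r) = 1 - r"
proof -
  have "complex_of_real r - 1 = complex_of_real (r - 1)" "1 - complex_of_real r = complex_of_real (1 - r)" by simp_all
  then show "cmod (complex_of_real r - 1) = 1 - r" "cmod (1 - complex_of_real r) = 1 - r"
    using assms by (simp_all only: norm_of_real)
qed

lemma dist_le:
  assumes "0 \<le> r" "r \<le> 1"
  shows "cmod (of_real r * exp (\<i> * of_real \<theta>) - exp (\<i> * of_real a)) \<le> (1 - r) + \<bar>\<theta> - a\<bar>"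
proof -
  have "cmod (of_real r * exp (\<i> * of_real \<theta>) - exp (\<i> * of_real a))
      \<le> cmod (of_real r * exp (\<i> * of_real \<theta>) - exp (\<i> * of_real \<theta>)) + cmod (exp (\<i> * of_real \<theta>) - exp (\<i> * of_real a))"
    by (meson norm_diff_triangle_le order_refl)
  also have "cmod (of_real r * exp (\<i> * of_real \<theta>) - exp (\<i> * of_real \<theta>)) = 1 - r"
  proof -
    have "of_real r * exp (\<i> * of_real \<theta>) - exp (\<i> * of_real \<theta>) = of_real (r - 1) * exp (\<i> * of_real \<theta>)"
      by (simp add: algebra_simps)
    then show ?thesis using assms by (simp add: norm_mult cm1)
  qed
  finally show ?thesis using exp_diff_le[of \<theta> a] by linarith
qed

lemma dist_ge:
  assumes "0 \<le> r" "r \<le> 1" "\<bar>\<theta> - b\<bar> \<le> 2*pi"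
  shows "((1 - r) + mdist (\<theta> - b) / 3) / 3 \<le> cmod (of_real r * exp (\<i> * of_real \<theta>) - exp (\<i> * of_real b))"
proof -
  let ?D = "cmod (of_real r * exp (\<i> * of_real \<theta>) - exp (\<i> * of_real b))"
  have e1: "cmod (of_real r * exp (\<i> * of_real \<theta>)) = r" using assms by (simp add: norm_mult)
  have "1 - r \<le> ?D"
    using norm_triangle_ineq2[of "exp (\<i> * of_real b)" "of_real r * exp (\<i> * of_real \<theta>)"] e1
    by (simp add: norm_minus_commute)
  moreover have "cmod (exp (\<i> * of_real \<theta>) - exp (\<i> * of_real b)) \<le> (1 - r) + ?D"
  proof -
    have "cmod (exp (\<i> * of_real \<theta>) - exp (\<i> * of_real b))
      \<le> cmod (exp (\<i> * of_real \<theta>) - of_real r * exp (\<i> * of_real \<theta>)) + ?D"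
      by (meson norm_diff_triangle_le order_refl)
    also have "cmod (exp (\<i> * of_real \<theta>) - of_real r * exp (\<i> * of_real \<theta>)) = 1 - r"
    proof -
      have "exp (\<i> * of_real \<theta>) - of_real r * exp (\<i> * of_real \<theta>) = of_real (1 - r) * exp (\<i> * of_real \<theta>)"
        by (simp add: algebra_simps)
      then show ?thesis using assms by (simp add: norm_mult cm1)
    qed
    finally show ?thesis .
  qed
  moreover have "mdist (\<theta> - b) / 3 \<le> cmod (exp (\<i> * of_real \<theta>) - exp (\<i> * of_real b))"
    by (rule exp_diff_ge[OF assms(3)])
  ultimately have "(1 - r) + mdist (\<theta> - b) / 3 \<le> 3 * ?D" by linarith
  then show ?thesis by simp
qed

lemma hh_antimono:
  assumes "0 < e" "0 < c" "0 \<le> s" "s \<le> t" "0 < k"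
  shows "hh k e c t \<le> hh k e c s"
  unfolding hh_def using assms
  by (intro powr_mono2') (auto intro: add_pos_nonneg mult_left_mono)

lemma hh_nonneg: "0 \<le> hh k e c t" by (simp add: hh_def)

lemma single_bound:
  assumes "0 \<le> r" "r < 1" "\<bar>\<theta> - b\<bar> \<le> 2*pi" "0 < k"
  shows "cmod (of_real r * exp (\<i> * of_real \<theta>) - exp (\<i> * of_real b)) powr (-k)
     \<le> 3 powr k * (hh k (1-r) (1/3) \<bar>\<theta> - b\<bar> + hh k (1-r) (1/3) \<bar>\<theta> - (b + 2*pi)\<bar> + hh k (1-r) (1/3) \<bar>\<theta> - (b - 2*pi)\<bar>)"
proof -
  let ?D = "cmod (of_real r * exp (\<i> * of_real \<theta>) - exp (\<i> * of_real b))"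
  let ?m = "mdist (\<theta> - b)"
  have m0: "0 \<le> ?m" by (simp add: mdist_def)
  have ge: "((1 - r) + ?m / 3) / 3 \<le> ?D" using dist_ge[of r \<theta> b] assms by simp
  have pos: "0 < ((1 - r) + ?m / 3) / 3" using assms m0 by simp
  have "?D powr (-k) \<le> (((1 - r) + ?m / 3) / 3) powr (-k)"
    using assms pos ge by (intro powr_mono2') auto
  also have "\<dots> = 3 powr k * hh k (1-r) (1/3) ?m"
    using pos powr_mult[of 3 3 k] unfolding hh_def by (simp add: powr_divide powr_minus divide_simps)
  also have "hh k (1-r) (1/3) ?m \<le> hh k (1-r) (1/3) \<bar>\<theta> - b\<bar> + hh k (1-r) (1/3) \<bar>\<theta> - (b + 2*pi)\<bar> + hh k (1-r) (1/3) \<bar>\<theta> - (b - 2*pi)\<bar>"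
    using hh_nonneg[of k "1-r" "1/3"]
  proof -
    have e1: "\<theta> - (b + 2*pi) = \<theta> - b - 2*pi" "\<theta> - (b - 2*pi) = \<theta> - b + 2*pi" by simp_all
    show ?thesis
      using hh_nonneg[of k "1-r" "1/3"] unfolding mdist_def min_def e1
      by (auto simp: add_increasing add_increasing2)
  qed
  finally show ?thesis by (simp add: mult_left_mono)
qed


lemma prod_bound:
  fixes w :: "nat \<Rightarrow> complex" and S :: "nat set" and z :: complex
  assumes S: "finite S" "j0 \<in> S" and d: "0 < \<delta>" "\<delta> \<le> 1"
    and sep: "\<forall>j\<in>S. \<forall>k\<in>S. j \<noteq> k \<longrightarrow> 2*\<delta> \<le> cmod (w j - w k)"
    and w1: "\<forall>j\<in>S. cmod (w j) = 1" and z1: "cmod z \<le> 1" and zw: "\<forall>j\<in>S. z \<noteq> w j" and k: "0 < k"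
  shows "(\<Prod>j\<in>S. cmod (z - w j)) powr (-k) \<le> (\<delta>^card S / 2) powr (-k) * (\<Sum>j\<in>S. cmod (z - w j) powr (-k))"
proof -
  have "\<exists>j\<in>S. \<delta>^card S / 2 * cmod (z - w j) \<le> (\<Prod>j\<in>S. cmod (z - w j))"
  proof (cases "\<exists>j\<in>S. cmod (z - w j) < \<delta>")
    case True
    then obtain j where j: "j \<in> S" "cmod (z - w j) < \<delta>" by blast
    have far: "\<delta> \<le> cmod (z - w i)" if "i \<in> S - {j}" for i
    proof -
      have "2*\<delta> \<le> cmod (w j - w i)" using sep that j by auto
      also have "\<dots> \<le> cmod (w j - z) + cmod (z - w i)" by (meson norm_diff_triangle_le order_refl)
      finally show ?thesis using j by (simp add: norm_minus_commute)
    qed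
    have "(\<Prod>i\<in>S-{j}. \<delta>) \<le> (\<Prod>i\<in>S-{j}. cmod (z - w i))"
      by (rule prod_mono) (use far d in auto)
    then have p1: "\<delta>^(card S - 1) \<le> (\<Prod>i\<in>S-{j}. cmod (z - w i))" using S j by simp
    have "\<delta>^card S = \<delta> * \<delta>^(card S - 1)"
      using S j by (metis card_gt_0_iff empty_iff power_eq_if less_numeral_extra(3))
    also have "\<dots> \<le> \<delta>^(card S - 1)" using d by (simp add: mult_left_le_one_le)
    finally have X: "\<delta>^card S \<le> \<delta>^(card S - 1)" .
    have "0 \<le> \<delta>^card S" using d by simp
    then have "\<delta>^card S / 2 \<le> (\<Prod>i\<in>S-{j}. cmod (z - w i))" using p1 X by linarith
    then have "\<delta>^card S / 2 * cmod (z - w j) \<le> cmod (z - w j) * (\<Prod>i\<in>S-{j}. cmod (z - w i))"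
      by (metis mult.commute mult_right_mono norm_ge_zero)
    also have "\<dots> = (\<Prod>i\<in>S. cmod (z - w i))" using S j by (metis prod.remove)
    finally show ?thesis using j by blast
  next
    case False
    have "(\<Prod>i\<in>S. \<delta>) \<le> (\<Prod>i\<in>S. cmod (z - w i))"
      by (rule prod_mono) (use False d in auto)
    then have p: "\<delta>^card S \<le> (\<Prod>i\<in>S. cmod (z - w i))" by simp
    have "cmod (z - w j0) \<le> cmod z + cmod (w j0)" by (rule norm_triangle_ineq4)
    then have "cmod (z - w j0) \<le> 2" using z1 w1 S by auto
    then have "\<delta>^card S / 2 * cmod (z - w j0) \<le> \<delta>^card S"
      using d by (simp add: mult_le_cancel_left1 divide_simps)
    then show ?thesis using p S by force
  qed
  then obtain j where j: "j \<in> S" "\<delta>^card S / 2 * cmod (z - w j) \<le> (\<Prod>j\<in>S. cmod (z - w j))" by blast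
  have pos: "0 < \<delta>^card S / 2 * cmod (z - w j)" using d zw j by auto
  have "(\<Prod>j\<in>S. cmod (z - w j)) powr (-k) \<le> (\<delta>^card S / 2 * cmod (z - w j)) powr (-k)"
    using pos j k by (intro powr_mono2') auto
  also have "\<dots> = (\<delta>^card S / 2) powr (-k) * cmod (z - w j) powr (-k)"
    using d by (intro powr_mult)
  also have "\<dots> \<le> (\<delta>^card S / 2) powr (-k) * (\<Sum>j\<in>S. cmod (z - w j) powr (-k))"
    by (intro mult_left_mono member_le_sum) (use j S in auto)
  finally show ?thesis .
qed


lemma hh_int_bound:
  assumes "0 < c" "0 < e" "\<bar>b\<bar> \<le> 3*pi"
  shows "(\<lambda>\<theta>. hh k e c \<bar>\<theta> - b\<bar>) integrable_on {-pi..pi}"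
    "integral {-pi..pi} (\<lambda>\<theta>. hh k e c \<bar>\<theta> - b\<bar>) \<le> 2*(Gf k e c (4*pi) - Gf k e c 0)"
proof -
  have h: "((\<lambda>\<theta>. hh k e c \<bar>\<theta> - b\<bar>) has_integral (2*(Gf k e c (4*pi) - Gf k e c 0))) {b-4*pi..b+4*pi}"
    using assms by (intro hh_sym) auto
  have sub: "{-pi..pi} \<subseteq> {b-4*pi..b+4*pi}" using assms by auto
  have i1: "(\<lambda>\<theta>. hh k e c \<bar>\<theta> - b\<bar>) integrable_on {b-4*pi..b+4*pi}" using h by blast
  show i2: "(\<lambda>\<theta>. hh k e c \<bar>\<theta> - b\<bar>) integrable_on {-pi..pi}"
    by (rule integrable_subinterval_real[OF i1 sub])
  have "integral {-pi..pi} (\<lambda>\<theta>. hh k e c \<bar>\<theta> - b\<bar>) \<le> integral {b-4*pi..b+4*pi} (\<lambda>\<theta>. hh k e c \<bar>\<theta> - b\<bar>)"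
    by (rule integral_subset_le[OF sub i2 i1]) (simp add: hh_nonneg)
  also have "\<dots> = 2*(Gf k e c (4*pi) - Gf k e c 0)" using h by (rule integral_unique)
  finally show "integral {-pi..pi} (\<lambda>\<theta>. hh k e c \<bar>\<theta> - b\<bar>) \<le> 2*(Gf k e c (4*pi) - Gf k e c 0)" .
qed

lemma Gf_lower:
  assumes "0 < c" "0 < e" "0 < T" "0 < k"
  shows "T * hh k e c T \<le> Gf k e c T - Gf k e c 0"
proof -
  have h: "((\<lambda>\<theta>. hh k e c \<bar>\<theta> - 0\<bar>) has_integral (Gf k e c (T-0) - Gf k e c (0-0))) {0..T}"
    using assms by (intro hh_right) auto
  have c: "((\<lambda>\<theta>. hh k e c T) has_integral (T * hh k e c T)) {0..T}"
    using has_integral_const_real[of "hh k e c T" 0 T] assms by simp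
  have "T * hh k e c T \<le> Gf k e c (T-0) - Gf k e c (0-0)"
    by (rule has_integral_le[OF c h]) (use assms in \<open>auto intro!: hh_antimono\<close>)
  then show ?thesis using assms by simp
qed

lemma asymp_intro:
  assumes "b < 1" "0 < c1" "\<forall>r\<in>{b<..<1}. 0 \<le> A r \<and> c1 * A r \<le> B r \<and> B r \<le> c2 * A r"
  shows "asymp_near1 A B"
  unfolding asymp_near1_def
proof (intro exI conjI)
  show "0 < c1" by fact
  show "c1 \<le> max c1 c2" by simp
  show "\<forall>\<^sub>F r in at_left 1. c1 * A r \<le> B r \<and> B r \<le> max c1 c2 * A r"
  proof (rule eventually_mono[OF eventually_at_left_real[OF assms(1)]])
    fix r assume "r \<in> {b<..<1}"
    then have "0 \<le> A r" "c1 * A r \<le> B r" "B r \<le> c2 * A r" using assms(3) by auto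
    moreover have "c2 * A r \<le> max c1 c2 * A r" using \<open>0 \<le> A r\<close> by (intro mult_right_mono) auto
    ultimately show "c1 * A r \<le> B r \<and> B r \<le> max c1 c2 * A r" by linarith
  qed
qed

theorem mainTheorem12:
  fixes \<kappa> :: real and n :: nat and zs :: "nat \<Rightarrow> complex"
    and g f :: "complex \<Rightarrow> complex"
    and rr vth C :: "nat \<Rightarrow> real"
  assumes kappa_pos: "\<kappa> > 0"
    and n_pos: "n \<ge> 1"
    and zs_T: "\<forall>j\<in>{1..n}. norm (zs j) = 1"
    and zs_distinct: "inj_on zs {1..n}"
    and g_hol: "g holomorphic_on ball 0 1"
    and lower: "\<exists>c0 r0. c0 > 0 \<and> 0 < r0 \<and> r0 < 1 \<and>
                  (\<forall>z. r0 < norm z \<and> norm z < 1 \<longrightarrow> norm (g z) \<ge> c0)"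
    and sect_params: "\<forall>j\<in>{1..n}. 0 < rr j \<and> rr j < 1 \<and> vth j > 0 \<and> C j > 0"
    and upper: "\<forall>j\<in>{1..n}. \<forall>z\<in>sector (rr j) (Arg (zs j)) (vth j). norm (g z) \<le> C j"
    and disjoint: "\<forall>j1\<in>{1..n}. \<forall>j2\<in>{1..n}. j1 \<noteq> j2 \<longrightarrow>
                  sector (rr j1) (Arg (zs j1)) (vth j1) \<inter> sector (rr j2) (Arg (zs j2)) (vth j2) = {}"
    and f_def: "\<forall>z. f z = (\<Prod>j=1..n. z - zs j) * g z"
  defines "I \<equiv> (\<lambda>r. integral {-pi..pi}
              (\<lambda>\<theta>. 1 / norm (f (complex_of_real r * exp (\<i> * complex_of_real \<theta>))) powr \<kappa>))"
  shows "(\<kappa> > 1 \<longrightarrow> asymp_near1 (\<lambda>r. 1 / (1 - r) powr (\<kappa> - 1)) I)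
       \<and> (\<kappa> = 1 \<longrightarrow> asymp_near1 (\<lambda>r. ln (1 / (1 - r))) I)
       \<and> (\<kappa> < 1 \<longrightarrow> asymp_near1 (\<lambda>r. 1) I)"
proof -
  obtain c0 r0 where c0: "c0 > 0" "0 < r0" "r0 < 1"
    and glow: "\<And>z. r0 < norm z \<Longrightarrow> norm z < 1 \<Longrightarrow> c0 \<le> norm (g z)"
    using lower by blast
  define S where "S = {1..n}"
  have finS: "finite S" and oneS: "1 \<in> S" and cardS: "card S = n"
    using n_pos by (auto simp: S_def)
  define b where "b j = Arg (zs j)" for j
  have zs1: "norm (zs j) = 1" if "j \<in> S" for j using zs_T that by (auto simp: S_def)
  have zs_eq: "zs j = exp (\<i> * of_real (b j))" if "j \<in> S" for j
  proof -
    have "zs j \<noteq> 0" using zs1[OF that] by auto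
    then show ?thesis using Arg_eq[of "zs j"] zs1[OF that] by (simp add: b_def)
  qed
  have b_bd: "-pi < b j" "b j \<le> pi" for j by (simp_all add: b_def mpi_less_Arg Arg_le_pi)
  obtain \<delta> where d: "0 < \<delta>" "\<delta> \<le> 1"
    and sep: "\<forall>j\<in>S. \<forall>k\<in>S. j \<noteq> k \<longrightarrow> 2*\<delta> \<le> cmod (zs j - zs k)"
  proof -
    define D where "D = insert 1 ((\<lambda>(j,k). cmod (zs j - zs k)) ` (S \<times> S - {p. fst p = snd p}))"
    have finD: "finite D" using finS by (simp add: D_def)
    have posD: "\<forall>x\<in>D. 0 < x"
    proof
      fix x assume "x \<in> D"
      then have "x = 1 \<or> (\<exists>j\<in>S. \<exists>k\<in>S. j \<noteq> k \<and> x = cmod (zs j - zs k))"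
        unfolding D_def by force
      then show "0 < x"
      proof
        assume "x = 1" then show ?thesis by simp
      next
        assume "\<exists>j\<in>S. \<exists>k\<in>S. j \<noteq> k \<and> x = cmod (zs j - zs k)"
        then obtain j k where jk: "j \<in> S" "k \<in> S" "j \<noteq> k" "x = cmod (zs j - zs k)" by blast
        then have "zs j \<noteq> zs k" using zs_distinct unfolding S_def inj_on_def by blast
        then show ?thesis using jk by simp
      qed
    qed
    define m where "m = Min D"
    have "D \<noteq> {}" by (simp add: D_def)
    then have "m \<in> D" unfolding m_def by (rule Min_in[OF finD])
    then have m0: "0 < m" using posD by blast
    have m1: "m \<le> 1" unfolding m_def by (rule Min_le[OF finD]) (simp add: D_def)
    have mle: "m \<le> cmod (zs j - zs k)" if "j \<in> S" "k \<in> S" "j \<noteq> k" for j k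
      using finD that unfolding m_def by (intro Min_le) (auto simp: D_def)
    show thesis
      by (rule that[of "m/2"]) (use m0 m1 mle in auto)
  qed
  have fz: "norm (f z) = (\<Prod>j\<in>S. cmod (z - zs j)) * norm (g z)" for z
    using f_def by (simp add: S_def norm_mult prod_norm)
  have fcont: "continuous_on (ball 0 1) f"
  proof -
    have "f = (\<lambda>z. (\<Prod>j=1..n. z - zs j) * g z)" using f_def by auto
    moreover have "continuous_on (ball 0 1) g"
      using g_hol by (rule holomorphic_on_imp_continuous_on)
    ultimately show ?thesis by (auto intro!: continuous_intros)
  qed
  have zn: "norm (complex_of_real r * exp (\<i> * complex_of_real \<theta>)) = r" if "0 \<le> r" for r \<theta>
    using that by (simp add: norm_mult)
  have fpos: "0 < norm (f (complex_of_real r * exp (\<i> * complex_of_real \<theta>)))"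
    if "r0 < r" "r < 1" for r \<theta>
  proof -
    let ?z = "complex_of_real r * exp (\<i> * complex_of_real \<theta>)"
    have nz: "norm ?z = r" using zn[of r] that c0 by simp
    have "?z \<noteq> zs j" if "j \<in> S" for j using nz zs1[OF that] \<open>r < 1\<close> by auto
    then have "0 < (\<Prod>j\<in>S. cmod (?z - zs j))" by (intro prod_pos) auto
    moreover have "0 < norm (g ?z)" using glow[of ?z] nz that c0 by auto
    ultimately show ?thesis unfolding fz by simp
  qed
  define Fi where "Fi r \<theta> = 1 / norm (f (complex_of_real r * exp (\<i> * complex_of_real \<theta>))) powr \<kappa>" for r \<theta>
  have I_eq: "I r = integral {-pi..pi} (Fi r)" for r by (simp add: I_def Fi_def[abs_def])
  have Fi_eq: "Fi r \<theta> = norm (f (complex_of_real r * exp (\<i> * complex_of_real \<theta>))) powr (-\<kappa>)" for r \<theta>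
    by (simp add: Fi_def powr_minus_divide)
  have Fnn: "0 \<le> Fi r \<theta>" for r \<theta> by (simp add: Fi_def)
  have Fcont: "continuous_on UNIV (Fi r)" if "r0 < r" "r < 1" for r
  proof -
    have g1: "continuous_on UNIV (\<lambda>\<theta>. complex_of_real r * exp (\<i> * complex_of_real \<theta>))"
      by (auto intro!: continuous_intros)
    have g2: "(\<lambda>\<theta>. complex_of_real r * exp (\<i> * complex_of_real \<theta>)) ` UNIV \<subseteq> ball 0 1"
      using zn[of r] that c0 by auto
    have "continuous_on UNIV (\<lambda>\<theta>. f (complex_of_real r * exp (\<i> * complex_of_real \<theta>)))"
      by (rule continuous_on_compose2[OF fcont g1 g2])
    then have "continuous_on UNIV (\<lambda>\<theta>. norm (f (complex_of_real r * exp (\<i> * complex_of_real \<theta>))) powr (-\<kappa>))"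
      using fpos[OF that] by (auto intro!: continuous_intros)
    then show ?thesis unfolding Fi_eq[abs_def] .
  qed
  have Fint: "Fi r integrable_on {x..y}" if "r0 < r" "r < 1" for r x y
    by (rule integrable_continuous_interval) (use continuous_on_subset[OF Fcont[OF that]] in blast)
  define K where "K = c0 powr (-\<kappa>) * (\<delta>^n/2) powr (-\<kappa>) * 3 powr \<kappa>"
  have K0: "0 \<le> K" by (simp add: K_def)
  define Hs where "Hs r \<theta> = (\<Sum>j\<in>S. hh \<kappa> (1-r) (1/3) \<bar>\<theta> - b j\<bar> + hh \<kappa> (1-r) (1/3) \<bar>\<theta> - (b j + 2*pi)\<bar>
      + hh \<kappa> (1-r) (1/3) \<bar>\<theta> - (b j - 2*pi)\<bar>)" for r \<theta>
  define DU where "DU r = Gf \<kappa> (1-r) (1/3) (4*pi) - Gf \<kappa> (1-r) (1/3) 0" for r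
  have ptU: "Fi r \<theta> \<le> K * Hs r \<theta>" if r: "r0 < r" "r < 1" and th: "\<theta> \<in> {-pi..pi}" for r \<theta>
  proof -
    let ?z = "complex_of_real r * exp (\<i> * complex_of_real \<theta>)"
    have nz: "norm ?z = r" using zn[of r] r c0 by simp
    have zne: "\<forall>j\<in>S. ?z \<noteq> zs j" using nz zs1 r by auto
    have P0: "0 < (\<Prod>j\<in>S. cmod (?z - zs j))" using zne by (intro prod_pos) auto
    have "c0 * (\<Prod>j\<in>S. cmod (?z - zs j)) \<le> norm (f ?z)"
      unfolding fz using glow[of ?z] nz r P0 by (simp add: mult.commute mult_right_mono)
    then have "Fi r \<theta> \<le> (c0 * (\<Prod>j\<in>S. cmod (?z - zs j))) powr (-\<kappa>)"
      unfolding Fi_eq using P0 c0 kappa_pos by (intro powr_mono2') auto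
    also have "\<dots> = c0 powr (-\<kappa>) * (\<Prod>j\<in>S. cmod (?z - zs j)) powr (-\<kappa>)"
      using c0 P0 by (simp add: powr_mult)
    also have "(\<Prod>j\<in>S. cmod (?z - zs j)) powr (-\<kappa>) \<le> (\<delta>^card S / 2) powr (-\<kappa>) * (\<Sum>j\<in>S. cmod (?z - zs j) powr (-\<kappa>))"
      by (rule prod_bound[OF finS oneS d sep]) (use zs1 nz r zne kappa_pos in auto)
    also have "(\<Sum>j\<in>S. cmod (?z - zs j) powr (-\<kappa>)) \<le> (\<Sum>j\<in>S. 3 powr \<kappa> * (hh \<kappa> (1-r) (1/3) \<bar>\<theta> - b j\<bar> + hh \<kappa> (1-r) (1/3) \<bar>\<theta> - (b j + 2*pi)\<bar>
      + hh \<kappa> (1-r) (1/3) \<bar>\<theta> - (b j - 2*pi)\<bar>))"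
    proof (rule sum_mono)
      fix j assume j: "j \<in> S"
      have "\<bar>\<theta> - b j\<bar> \<le> 2*pi" using th b_bd[of j] by auto
      then show "cmod (?z - zs j) powr (-\<kappa>) \<le> 3 powr \<kappa> * (hh \<kappa> (1-r) (1/3) \<bar>\<theta> - b j\<bar> + hh \<kappa> (1-r) (1/3) \<bar>\<theta> - (b j + 2*pi)\<bar>
      + hh \<kappa> (1-r) (1/3) \<bar>\<theta> - (b j - 2*pi)\<bar>)"
        unfolding zs_eq[OF j] using r c0 kappa_pos by (intro single_bound) auto
    qed
    also have "\<dots> = 3 powr \<kappa> * Hs r \<theta>" by (simp add: Hs_def sum_distrib_left)
    finally show ?thesis
      using c0 by (simp add: K_def cardS mult_left_mono mult.assoc)
  qed
  have HsI: "Hs r integrable_on {-pi..pi}" "integral {-pi..pi} (Hs r) \<le> real n * (6 * DU r)"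
    if "r < 1" for r
  proof -
    have e: "0 < 1 - r" using that by simp
    have bd1: "\<bar>b j\<bar> \<le> 3*pi" "\<bar>b j + 2*pi\<bar> \<le> 3*pi" "\<bar>b j - 2*pi\<bar> \<le> 3*pi" for j
      using b_bd[of j] by auto
    note hb = hh_int_bound[OF _ e, of "1/3"]
    have ij: "(\<lambda>\<theta>. hh \<kappa> (1-r) (1/3) \<bar>\<theta> - b j\<bar> + hh \<kappa> (1-r) (1/3) \<bar>\<theta> - (b j + 2*pi)\<bar>
      + hh \<kappa> (1-r) (1/3) \<bar>\<theta> - (b j - 2*pi)\<bar>) integrable_on {-pi..pi}" for j
      using hb(1)[OF _ bd1(1)] hb(1)[OF _ bd1(2)] hb(1)[OF _ bd1(3)] by (auto intro!: integrable_add)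
    show "Hs r integrable_on {-pi..pi}"
      unfolding Hs_def[abs_def] using ij by (intro integrable_sum finS) auto
    have "integral {-pi..pi} (Hs r) = (\<Sum>j\<in>S. integral {-pi..pi} (\<lambda>\<theta>. hh \<kappa> (1-r) (1/3) \<bar>\<theta> - b j\<bar> + hh \<kappa> (1-r) (1/3) \<bar>\<theta> - (b j + 2*pi)\<bar>
      + hh \<kappa> (1-r) (1/3) \<bar>\<theta> - (b j - 2*pi)\<bar>))"
      unfolding Hs_def[abs_def] using ij finS by (intro Henstock_Kurzweil_Integration.integral_sum) auto
    also have "\<dots> \<le> (\<Sum>j\<in>S. 6 * DU r)"
    proof (rule sum_mono)
      fix j assume "j \<in> S"
      have "integral {-pi..pi} (\<lambda>\<theta>. hh \<kappa> (1-r) (1/3) \<bar>\<theta> - b j\<bar> + hh \<kappa> (1-r) (1/3) \<bar>\<theta> - (b j + 2*pi)\<bar>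
      + hh \<kappa> (1-r) (1/3) \<bar>\<theta> - (b j - 2*pi)\<bar>) = integral {-pi..pi} (\<lambda>\<theta>. hh \<kappa> (1-r) (1/3) \<bar>\<theta> - b j\<bar>)
        + integral {-pi..pi} (\<lambda>\<theta>. hh \<kappa> (1-r) (1/3) \<bar>\<theta> - (b j + 2*pi)\<bar>)
        + integral {-pi..pi} (\<lambda>\<theta>. hh \<kappa> (1-r) (1/3) \<bar>\<theta> - (b j - 2*pi)\<bar>)"
        using hb(1)[OF _ bd1(1)] hb(1)[OF _ bd1(2)] hb(1)[OF _ bd1(3)]
        by (simp add: Henstock_Kurzweil_Integration.integral_add integrable_add)
      also have "\<dots> \<le> 6 * DU r"
      proof -
        have "integral {-pi..pi} (\<lambda>\<theta>. hh \<kappa> (1-r) (1/3) \<bar>\<theta> - b j\<bar>) \<le> 2 * DU r"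
          unfolding DU_def by (rule hh_int_bound(2)) (use e bd1 in simp_all)
        moreover have "integral {-pi..pi} (\<lambda>\<theta>. hh \<kappa> (1-r) (1/3) \<bar>\<theta> - (b j + 2*pi)\<bar>) \<le> 2 * DU r"
          unfolding DU_def by (rule hh_int_bound(2)) (use e bd1 in simp_all)
        moreover have "integral {-pi..pi} (\<lambda>\<theta>. hh \<kappa> (1-r) (1/3) \<bar>\<theta> - (b j - 2*pi)\<bar>) \<le> 2 * DU r"
          unfolding DU_def by (rule hh_int_bound(2)) (use e bd1 in simp_all)
        ultimately show ?thesis by linarith
      qed
      finally show "integral {-pi..pi} (\<lambda>\<theta>. hh \<kappa> (1-r) (1/3) \<bar>\<theta> - b j\<bar> + hh \<kappa> (1-r) (1/3) \<bar>\<theta> - (b j + 2*pi)\<bar>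
      + hh \<kappa> (1-r) (1/3) \<bar>\<theta> - (b j - 2*pi)\<bar>) \<le> 6 * DU r" .
    qed
    also have "\<dots> = real n * (6 * DU r)" using cardS by simp
    finally show "integral {-pi..pi} (Hs r) \<le> real n * (6 * DU r)" .
  qed
  have upI: "I r \<le> K * (real n * (6 * DU r))" if "r0 < r" "r < 1" for r
  proof -
    have "I r \<le> integral {-pi..pi} (\<lambda>\<theta>. K * Hs r \<theta>)"
    proof -
      have iK: "(\<lambda>\<theta>. K * Hs r \<theta>) integrable_on {-pi..pi}"
        using integrable_cmul[OF HsI(1)[of r], of K] that by simp
      show ?thesis
        unfolding I_eq using iK that Fint[OF that]
        by (intro integral_le) (auto intro!: ptU)
    qed
    also have "\<dots> = K * integral {-pi..pi} (Hs r)" by simp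
    also have "\<dots> \<le> K * (real n * (6 * DU r))"
      using HsI(2)[of r] that K0 by (intro mult_left_mono) auto
    finally show ?thesis .
  qed

  define a where "a = b 1"
  have vth1: "0 < vth 1" and rr1: "0 < rr 1" "rr 1 < 1" and C1: "0 < C 1"
    using sect_params oneS by (auto simp: S_def)
  define \<eta> where "\<eta> = min (vth 1 / 2) (pi/2)"
  have eta: "0 < \<eta>" "\<eta> < vth 1" "\<eta> \<le> pi/2" using vth1 by (auto simp: \<eta>_def)
  define M where "M = 2^n * C 1"
  have M0: "0 < M" using C1 by (simp add: M_def)
  define r2 where "r2 = max r0 (rr 1)"
  have r2: "0 < r2" "r2 < 1" "r0 \<le> r2" "rr 1 \<le> r2" using c0 rr1 by (auto simp: r2_def)
  have ptL: "M powr (-\<kappa>) * hh \<kappa> (1-r) 1 \<bar>\<theta> - a\<bar> \<le> Fi r \<theta>"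
    if r: "r2 < r" "r < 1" and th: "\<bar>\<theta> - a\<bar> < vth 1" for r \<theta>
  proof -
    let ?z = "complex_of_real r * exp (\<i> * complex_of_real \<theta>)"
    have rr0: "r0 < r" using r r2 by linarith
    have nz: "norm ?z = r" using zn[of r] r r2 by simp
    have "\<exists>\<rho> \<theta>'. ?z = complex_of_real \<rho> * exp (\<i> * complex_of_real \<theta>') \<and> rr 1 < \<rho> \<and> \<rho> < 1
        \<and> Arg (zs 1) - vth 1 < \<theta>' \<and> \<theta>' < Arg (zs 1) + vth 1"
      using r r2 th by (intro exI[of _ r] exI[of _ \<theta>]) (auto simp: a_def b_def)
    then have insec: "?z \<in> sector (rr 1) (Arg (zs 1)) (vth 1)" by (simp add: sector_def)
    have gC: "norm (g ?z) \<le> C 1" using upper insec oneS unfolding S_def by blast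
    have le2: "cmod (?z - zs j) \<le> 2" if "j \<in> S" for j
    proof -
      have "cmod (?z - zs j) \<le> norm ?z + norm (zs j)" by (rule norm_triangle_ineq4)
      then show ?thesis using nz zs1[OF that] r by simp
    qed
    have "(\<Prod>j\<in>S-{1}. cmod (?z - zs j)) \<le> (\<Prod>j\<in>S-{1}. 2)"
      by (rule prod_mono) (use le2 in auto)
    also have "\<dots> = 2^(n-1)" using finS oneS cardS by simp
    also have "\<dots> \<le> 2^n" by (intro power_increasing) auto
    finally have P1: "(\<Prod>j\<in>S-{1}. cmod (?z - zs j)) \<le> 2^n" .
    have P: "(\<Prod>j\<in>S. cmod (?z - zs j)) = cmod (?z - zs 1) * (\<Prod>j\<in>S-{1}. cmod (?z - zs j))"
      using finS oneS by (metis prod.remove)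
    have "norm (f ?z) \<le> cmod (?z - zs 1) * 2^n * C 1"
      unfolding fz P
      by (intro mult_mono mult_left_mono P1 gC) (auto intro: prod_nonneg)
    also have "cmod (?z - zs 1) \<le> (1 - r) + \<bar>\<theta> - a\<bar>"
      unfolding zs_eq[OF oneS] a_def using dist_le[of r \<theta> "b 1"] r r2 by simp
    then have "cmod (?z - zs 1) * 2^n * C 1 \<le> ((1 - r) + \<bar>\<theta> - a\<bar>) * 2^n * C 1"
      using C1 by (intro mult_right_mono) auto
    finally have fle: "norm (f ?z) \<le> M * ((1 - r) + \<bar>\<theta> - a\<bar>)" by (simp add: M_def mult_ac)
    have "(M * ((1 - r) + \<bar>\<theta> - a\<bar>)) powr (-\<kappa>) \<le> Fi r \<theta>"
      unfolding Fi_eq using fpos[OF rr0 r(2)] fle kappa_pos by (intro powr_mono2') auto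
    moreover have "(M * ((1 - r) + \<bar>\<theta> - a\<bar>)) powr (-\<kappa>) = M powr (-\<kappa>) * hh \<kappa> (1-r) 1 \<bar>\<theta> - a\<bar>"
      unfolding hh_def using M0 r by (simp add: powr_mult)
    ultimately show ?thesis by simp
  qed
  have lowI: "M powr (-\<kappa>) * (Gf \<kappa> (1-r) 1 T - Gf \<kappa> (1-r) 1 0) \<le> I r"
    if r: "r2 < r" "r < 1" and T: "0 < T" "T \<le> \<eta>" for r T
  proof -
    have rr0: "r0 < r" using r r2 by linarith
    define p where "p = (if a \<le> 0 then a else a - T)"
    have sub: "{p..p+T} \<subseteq> {-pi..pi}" using b_bd[of 1] T eta by (auto simp: p_def a_def)
    have hint: "((\<lambda>\<theta>. hh \<kappa> (1-r) 1 \<bar>\<theta> - a\<bar>) has_integral (Gf \<kappa> (1-r) 1 T - Gf \<kappa> (1-r) 1 0)) {p..p+T}"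
    proof (cases "a \<le> 0")
      case True then show ?thesis using hh_right[of 1 "1-r" a a "a+T" \<kappa>] r T by (simp add: p_def)
    next
      case False then show ?thesis using hh_left[of 1 "1-r" "a-T" a a \<kappa>] r T by (simp add: p_def)
    qed
    have "M powr (-\<kappa>) * (Gf \<kappa> (1-r) 1 T - Gf \<kappa> (1-r) 1 0) \<le> integral {p..p+T} (Fi r)"
    proof (rule has_integral_le[OF has_integral_mult_right[OF hint] integrable_integral[OF Fint[OF rr0 r(2)]]])
      fix \<theta> assume "\<theta> \<in> {p..p+T}"
      then have "\<bar>\<theta> - a\<bar> < vth 1" using T eta by (auto simp: p_def split: if_splits)
      then show "M powr (-\<kappa>) * hh \<kappa> (1-r) 1 \<bar>\<theta> - a\<bar> \<le> Fi r \<theta>" by (rule ptL[OF r])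
    qed
    also have "\<dots> \<le> integral {-pi..pi} (Fi r)"
      by (rule integral_subset_le[OF sub Fint[OF rr0 r(2)] Fint[OF rr0 r(2)]]) (simp add: Fnn)
    finally show ?thesis unfolding I_eq .
  qed
  have Iup: "I r \<le> K * (real n * (6 * DU r))" if "r0 < r" "r < 1" for r using upI that .
  have caseG: "asymp_near1 (\<lambda>r. 1 / (1 - r) powr (\<kappa> - 1)) I" if k1: "\<kappa> > 1"
  proof -
    define bb where "bb = max r2 (1 - \<eta>)"
    have bb: "bb < 1" using r2 eta by (simp add: bb_def)
    define c1 where "c1 = M powr (-\<kappa>) * 2 powr (-\<kappa>)"
    define c2 where "c2 = K * (real n * (6 * (3 / (\<kappa> - 1))))"
    show ?thesis
    proof (rule asymp_intro[OF bb, of c1 _ _ c2])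
      show "0 < c1" using M0 by (simp add: c1_def)
      show "\<forall>r\<in>{bb<..<1}. 0 \<le> 1 / (1 - r) powr (\<kappa> - 1) \<and> c1 * (1 / (1 - r) powr (\<kappa> - 1)) \<le> I r
          \<and> I r \<le> c2 * (1 / (1 - r) powr (\<kappa> - 1))"
      proof
        fix r assume r: "r \<in> {bb<..<1}"
        then have rr: "r2 < r" "r < 1" "1 - r \<le> \<eta>" by (auto simp: bb_def)
        have rr0: "r0 < r" using rr r2 by linarith
        define e where "e = 1 - r"
        have e: "0 < e" using rr by (simp add: e_def)
        have A: "1 / (1 - r) powr (\<kappa> - 1) = e powr (1 - \<kappa>)"
        proof -
          have "e powr (1 - \<kappa>) = e powr (- (\<kappa> - 1))" by simp
          also have "\<dots> = 1 / e powr (\<kappa> - 1)" by (rule powr_minus_divide)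
          finally show ?thesis by (simp add: e_def)
        qed
        have L1: "M powr (-\<kappa>) * (Gf \<kappa> e 1 e - Gf \<kappa> e 1 0) \<le> I r"
          using lowI[OF rr(1,2), of e] e rr by (simp add: e_def)
        have L2: "e * hh \<kappa> e 1 e \<le> Gf \<kappa> e 1 e - Gf \<kappa> e 1 0"
          by (rule Gf_lower) (use e kappa_pos in auto)
        have L3: "e * hh \<kappa> e 1 e = 2 powr (-\<kappa>) * e powr (1 - \<kappa>)"
        proof -
          have "hh \<kappa> e 1 e = (2 * e) powr (-\<kappa>)" by (simp add: hh_def)
          also have "\<dots> = 2 powr (-\<kappa>) * e powr (-\<kappa>)" using e by (simp add: powr_mult)
          finally have "e * hh \<kappa> e 1 e = 2 powr (-\<kappa>) * (e powr 1 * e powr (-\<kappa>))" using e by simp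
          also have "e powr 1 * e powr (-\<kappa>) = e powr (1 - \<kappa>)" by (metis powr_add diff_conv_add_uminus)
          finally show ?thesis .
        qed
        have low: "c1 * e powr (1 - \<kappa>) \<le> I r"
        proof -
          have "c1 * e powr (1 - \<kappa>) = M powr (-\<kappa>) * (e * hh \<kappa> e 1 e)" by (simp add: c1_def L3)
          also have "\<dots> \<le> M powr (-\<kappa>) * (Gf \<kappa> e 1 e - Gf \<kappa> e 1 0)"
            by (rule mult_left_mono[OF L2]) simp
          finally show ?thesis using L1 by linarith
        qed
        define X where "X = (e + 1/3 * (4*pi)) powr (1 - \<kappa>)"
        define Y where "Y = e powr (1 - \<kappa>)"
        have X0: "0 \<le> X" by (simp add: X_def)
        have "DU r = (X - Y) / (1/3 * (1 - \<kappa>))"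
          using k1 by (simp add: DU_def Gf_def X_def Y_def e_def diff_divide_distrib)
        also have "\<dots> = 3 * (Y - X) / (\<kappa> - 1)" using k1 by (simp add: field_simps)
        also have "\<dots> \<le> 3 * Y / (\<kappa> - 1)" using k1 X0 by (intro divide_right_mono) auto
        finally have DU: "DU r \<le> 3 / (\<kappa> - 1) * Y" by simp
        have "I r \<le> K * (real n * (6 * DU r))" by (rule Iup[OF rr0 rr(2)])
        also have "\<dots> \<le> K * (real n * (6 * (3 / (\<kappa> - 1) * Y)))"
          using DU K0 by (intro mult_left_mono) auto
        also have "\<dots> = c2 * Y" by (simp add: c2_def)
        finally have up: "I r \<le> c2 * Y" .
        show "0 \<le> 1 / (1 - r) powr (\<kappa> - 1) \<and> c1 * (1 / (1 - r) powr (\<kappa> - 1)) \<le> I r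
          \<and> I r \<le> c2 * (1 / (1 - r) powr (\<kappa> - 1))"
          using low up unfolding A Y_def by simp
      qed
    qed
  qed
  have caseE: "asymp_near1 (\<lambda>r. ln (1 / (1 - r))) I" if k1: "\<kappa> = 1"
  proof -
    define L0 where "L0 = max 1 (- 2 * ln \<eta>)"
    define bb where "bb = max r2 (1 - exp (- L0))"
    have bb: "bb < 1" using r2 by (simp add: bb_def)
    define c1 where "c1 = M powr (-\<kappa>) / 2"
    define L1 where "L1 = ln (1 + 1/3 * (4*pi))"
    have L1: "0 \<le> L1" by (simp add: L1_def)
    define c2 where "c2 = K * (real n * (6 * (3 * (L1 + 1))))"
    show ?thesis
    proof (rule asymp_intro[OF bb, of c1 _ _ c2])
      show "0 < c1" using M0 by (simp add: c1_def)
      show "\<forall>r\<in>{bb<..<1}. 0 \<le> ln (1 / (1 - r)) \<and> c1 * ln (1 / (1 - r)) \<le> I r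
          \<and> I r \<le> c2 * ln (1 / (1 - r))"
      proof
        fix r assume r: "r \<in> {bb<..<1}"
        then have rr: "r2 < r" "r < 1" "1 - r < exp (- L0)" by (auto simp: bb_def)
        have rr0: "r0 < r" using rr r2 by linarith
        define e where "e = 1 - r"
        have e: "0 < e" "e \<le> 1" using rr r2 by (auto simp: e_def)
        define A where "A = ln (1 / (1 - r))"
        have A: "A = - ln e" using e by (simp add: A_def e_def ln_div)
        have "ln e < ln (exp (- L0))" using e rr by (subst ln_less_cancel_iff) (auto simp: e_def)
        then have AL: "L0 < A" using A by simp
        then have A1: "1 \<le> A" "- 2 * ln \<eta> \<le> A" by (auto simp: L0_def)
        have L: "M powr (-\<kappa>) * (Gf \<kappa> e 1 \<eta> - Gf \<kappa> e 1 0) \<le> I r"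
          using lowI[OF rr(1,2), of \<eta>] eta by (simp add: e_def)
        have "Gf \<kappa> e 1 \<eta> - Gf \<kappa> e 1 0 = ln (e + \<eta>) - ln e" using k1 by (simp add: Gf_def)
        also have "\<dots> \<ge> ln \<eta> + A" using e eta A by simp
        finally have "A / 2 \<le> Gf \<kappa> e 1 \<eta> - Gf \<kappa> e 1 0" using A1 by linarith
        then have low: "c1 * A \<le> I r" using L M0 unfolding c1_def
          by (smt (verit) mult_left_mono powr_ge_zero times_divide_eq_left times_divide_eq_right)
        have "DU r = (ln (e + 1/3 * (4*pi)) - ln e) / (1/3)"
          using k1 by (simp add: DU_def Gf_def e_def diff_divide_distrib)
        also have "ln (e + 1/3 * (4*pi)) \<le> L1" unfolding L1_def
          using e pi_gt_zero by (subst ln_le_cancel_iff) (auto intro: add_pos_pos)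
        then have "(ln (e + 1/3 * (4*pi)) - ln e) / (1/3) \<le> 3 * (L1 + A)" using A by simp
        also have "\<dots> \<le> 3 * ((L1 + 1) * A)" using A1 L1 mult_right_mono[OF A1(1) L1] by (simp add: algebra_simps)
        finally have DU: "DU r \<le> 3 * (L1 + 1) * A" by (simp only: mult.assoc)
        have "I r \<le> K * (real n * (6 * DU r))" by (rule Iup[OF rr0 rr(2)])
        also have "\<dots> \<le> K * (real n * (6 * (3 * (L1 + 1) * A)))"
          using DU K0 by (intro mult_left_mono) auto
        also have "\<dots> = c2 * A" by (simp add: c2_def)
        finally have up: "I r \<le> c2 * A" .
        show "0 \<le> ln (1 / (1 - r)) \<and> c1 * ln (1 / (1 - r)) \<le> I r \<and> I r \<le> c2 * ln (1 / (1 - r))"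
          using low up A1 unfolding A_def by simp
      qed
    qed
  qed
  have caseS: "asymp_near1 (\<lambda>r. 1) I" if k1: "\<kappa> < 1"
  proof -
    define c1 where "c1 = M powr (-\<kappa>) * (\<eta> * (1 + \<eta>) powr (-\<kappa>))"
    define c2 where "c2 = K * (real n * (6 * (3 * (1 + 1/3 * (4*pi)) powr (1 - \<kappa>) / (1 - \<kappa>))))"
    show ?thesis
    proof (rule asymp_intro[OF r2(2), of c1 _ _ c2])
      show "0 < c1" using M0 eta by (simp add: c1_def)
      show "\<forall>r\<in>{r2<..<1}. 0 \<le> (1::real) \<and> c1 * 1 \<le> I r \<and> I r \<le> c2 * 1"
      proof
        fix r assume r: "r \<in> {r2<..<1}"
        then have rr: "r2 < r" "r < 1" by auto
        have rr0: "r0 < r" using rr r2 by linarith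
        define e where "e = 1 - r"
        have e: "0 < e" "e \<le> 1" using rr r2 by (auto simp: e_def)
        have L: "M powr (-\<kappa>) * (Gf \<kappa> e 1 \<eta> - Gf \<kappa> e 1 0) \<le> I r"
          using lowI[OF rr(1,2), of \<eta>] eta by (simp add: e_def)
        have "\<eta> * hh \<kappa> e 1 \<eta> \<le> Gf \<kappa> e 1 \<eta> - Gf \<kappa> e 1 0"
          by (rule Gf_lower) (use e eta kappa_pos in auto)
        moreover have "(1 + \<eta>) powr (-\<kappa>) \<le> hh \<kappa> e 1 \<eta>"
          unfolding hh_def using e eta kappa_pos by (intro powr_mono2') auto
        ultimately have "\<eta> * (1 + \<eta>) powr (-\<kappa>) \<le> Gf \<kappa> e 1 \<eta> - Gf \<kappa> e 1 0"
          using eta by (smt (verit) mult_left_mono)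
        then have low: "c1 \<le> I r" using L unfolding c1_def
          by (smt (verit) mult_left_mono powr_ge_zero)
        define X where "X = (e + 1/3 * (4*pi)) powr (1 - \<kappa>)"
        define Y where "Y = e powr (1 - \<kappa>)"
        have Y0: "0 \<le> Y" by (simp add: Y_def)
        have X1: "X \<le> (1 + 1/3 * (4*pi)) powr (1 - \<kappa>)"
          unfolding X_def using e k1 by (intro powr_mono2) auto
        have "DU r = (X - Y) / (1/3 * (1 - \<kappa>))"
          using k1 by (simp add: DU_def Gf_def X_def Y_def e_def diff_divide_distrib)
        also have "\<dots> = 3 * (X - Y) / (1 - \<kappa>)" using k1 by (simp add: field_simps)
        also have "\<dots> \<le> 3 * (1 + 1/3 * (4*pi)) powr (1 - \<kappa>) / (1 - \<kappa>)"
          using k1 X1 Y0 by (intro divide_right_mono) auto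
        finally have DU: "DU r \<le> 3 * (1 + 1/3 * (4*pi)) powr (1 - \<kappa>) / (1 - \<kappa>)" .
        have "I r \<le> K * (real n * (6 * DU r))" by (rule Iup[OF rr0 rr(2)])
        also have "\<dots> \<le> c2"
          unfolding c2_def using DU K0 by (intro mult_left_mono) auto
        finally show "0 \<le> (1::real) \<and> c1 * 1 \<le> I r \<and> I r \<le> c2 * 1" using low by simp
      qed
    qed
  qed
  show ?thesis using caseG caseE caseS by blast
qed

end
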